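(* Let $\alpha\in\mathbb{R}\setminus\pi\mathbb{Z}$, put $a=\cot\alpha$ and $w=a+i$ (so $\bar w=a-i$). For $n\ge 1$ let $C_n=aJ_n+B_n\in M_n(\mathbb{C})$, i.e. the matrix with all diagonal entries $a$, all entries above the diagonal $a+i$ and all entries below the diagonal $a-i$. Let $\chi_n(\alpha;\lambda)=\det(\lambda I_n-C_n)$ and $\chi_0(\alpha;\lambda)=1$. Then for $n\ge 2$ $$\chi_n(\alpha;\lambda)=(2\lambda-2a+w+\bar w)\,\chi_{n-1}(\alpha;\lambda)-(\lambda-a+w)(\lambda-a+\bar w)\,\chi_{n-2}(\alpha;\lambda),$$ and for $n\ge 1$ and real $\lambda$ $$\chi_n(\alpha;\lambda)=\frac{(\cot\alpha+i)(\lambda-i)^n-(\cot\alpha-i)(\lambda+i)^n}{2i}=\operatorname{Im}\big((\cot\alpha+i)(\lambda-i)^n\big).$$ The eigenvalues of $C_n$ are $\lambda_k=\cot\frac{\alpha+k\pi}{n}$, $0\le k\le n-1$; that is, $\chi_n(\alpha;\lambda)=\prod_{k=0}^{n-1}\big(\lambda-\cot\frac{\alpha+k\pi}{n}\big)$.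
   Context: $J_n$ denotes the $n\times n$ matrix all of whose entries equal $1$. $B_n=i\,M$ where $M$ is the $n\times n$ matrix with zero diagonal, all entries above the diagonal equal to $1$ and all entries below the diagonal equal to $-1$. *)

theory Defs
  imports Complex_Main "Jordan_Normal_Form.Determinant"
begin

definition J_mat :: "nat \<Rightarrow> complex mat" where
  "J_mat n = mat n n (\<lambda>(i,j). 1)"

definition B_mat :: "nat \<Rightarrow> complex mat" where
  "B_mat n = \<i> \<cdot>\<^sub>m mat n n (\<lambda>(i,j). if i = j then 0 else if i < j then 1 else -1)"

definition C_mat :: "real \<Rightarrow> nat \<Rightarrow> complex mat" where
  "C_mat \<alpha> n = complex_of_real (cot \<alpha>) \<cdot>\<^sub>m J_mat n + B_mat n"

definition chi :: "real \<Rightarrow> nat \<Rightarrow> complex \<Rightarrow> complex" where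
  "chi \<alpha> n x = (if n = 0 then 1 else det (x \<cdot>\<^sub>m 1\<^sub>m n - C_mat \<alpha> n))"

end

theory Submission imports Defs "HOL-Computational_Algebra.Polynomial" begin

definition Kmat :: "nat \<Rightarrow> complex \<Rightarrow> complex \<Rightarrow> complex \<Rightarrow> complex mat" where
  "Kmat n d u l = mat n n (\<lambda>(i,j). if i = j then d else if i < j then u else l)"

lemma Kmat_carrier[simp]: "Kmat n d u l \<in> carrier_mat n n"
  by (simp add: Kmat_def)

lemma diag_Kmat: "diag_mat (Kmat n d u l) = replicate n d"
  by (simp add: diag_mat_def Kmat_def list_eq_iff_nth_eq)

lemma det_Kmat_lower: "det (Kmat n d 0 l) = d ^ n"
proof -
  have "det (Kmat n d 0 l) = prod_list (diag_mat (Kmat n d 0 l))"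
    by (rule det_lower_triangular[of n]) (auto simp: Kmat_def)
  also have "\<dots> = d ^ n"
    by (simp add: diag_Kmat)
  finally show ?thesis .
qed

lemma det_Kmat_upper: "det (Kmat n d u 0) = d ^ n"
proof -
  have "det (Kmat n d u 0) = prod_list (diag_mat (Kmat n d u 0))"
    by (rule det_upper_triangular[of _ n]) (auto simp: Kmat_def upper_triangular_def)
  also have "\<dots> = d ^ n"
    by (simp add: diag_Kmat)
  finally show ?thesis .
qed

lemma det_rank_row:
  fixes A B :: "complex mat"
  assumes A: "A \<in> carrier_mat n n" and B: "B \<in> carrier_mat n n" and n: "n > 0"
    and Bz: "\<And>i j. i < n - 1 \<Longrightarrow> j < n \<Longrightarrow> B $$ (i,j) = 0"
  shows "det (A + t \<cdot>\<^sub>m B) = det A + t * (\<Sum>j<n. B $$ (n-1,j) * cofactor A (n-1) j)"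
proof -
  have AB: "A + t \<cdot>\<^sub>m B \<in> carrier_mat n n" using A B by simp
  have cof: "cofactor (A + t \<cdot>\<^sub>m B) (n-1) j = cofactor A (n-1) j" if "j < n" for j
  proof -
    have "mat_delete (A + t \<cdot>\<^sub>m B) (n-1) j = mat_delete A (n-1) j"
      using A B Bz by (intro eq_matI) (auto simp: mat_delete_def)
    thus ?thesis by (simp add: cofactor_def)
  qed
  have "det (A + t \<cdot>\<^sub>m B) = (\<Sum>j<n. (A + t \<cdot>\<^sub>m B) $$ (n-1,j) * cofactor (A + t \<cdot>\<^sub>m B) (n-1) j)"
    using n by (intro laplace_expansion_row[OF AB]) auto
  also have "\<dots> = (\<Sum>j<n. (A $$ (n-1,j) + t * B $$ (n-1,j)) * cofactor A (n-1) j)"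
    using A B n cof by (intro sum.cong) auto
  also have "\<dots> = (\<Sum>j<n. A $$ (n-1,j) * cofactor A (n-1) j) + t * (\<Sum>j<n. B $$ (n-1,j) * cofactor A (n-1) j)"
    by (simp add: distrib_right sum.distrib sum_distrib_left mult.assoc)
  also have "(\<Sum>j<n. A $$ (n-1,j) * cofactor A (n-1) j) = det A"
    using n by (intro laplace_expansion_row[OF A, symmetric]) auto
  finally show ?thesis .
qed

lemma det_Kmat_affine:
  assumes n: "n > 0"
  shows "\<exists>c. \<forall>t. det (Kmat n (d+t) (u+t) (l+t)) = det (Kmat n d u l) + t * c"
proof -
  define E :: "complex mat" where "E = mat n n (\<lambda>(i,j). if i = j then 1 else if j = Suc i then -1 else 0)"
  define J :: "complex mat" where "J = mat n n (\<lambda>_. 1)"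
  define K where "K = Kmat n d u l"
  have E: "E \<in> carrier_mat n n" and J: "J \<in> carrier_mat n n" and K: "K \<in> carrier_mat n n"
    by (auto simp: E_def J_def K_def)
  have detE: "det E = 1"
  proof -
    have "det E = prod_list (diag_mat E)"
      by (rule det_upper_triangular[OF _ E]) (auto simp: E_def upper_triangular_def)
    also have "diag_mat E = replicate n 1"
      by (simp add: diag_mat_def E_def list_eq_iff_nth_eq)
    finally show ?thesis by simp
  qed
  have EJ0: "(E * J) $$ (i,j) = 0" if "i < n - 1" "j < n" for i j
  proof -
    have "(E * J) $$ (i,j) = (\<Sum>k\<in>{0..<n}. (if i = k then 1 else if k = Suc i then -1 else 0))"
      using that E J by (simp add: index_mult_mat scalar_prod_def E_def J_def row_def col_def)
    also have "\<dots> = (\<Sum>k\<in>{0..<n}. (if k = i then 1 else 0)) - (\<Sum>k\<in>{0..<n}. (if k = Suc i then 1 else 0))"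
      by (subst sum_subtractf[symmetric]) (intro sum.cong, auto)
    also have "\<dots> = 0" using that by simp
    finally show ?thesis .
  qed
  define c where "c = (\<Sum>j<n. (E * J) $$ (n-1,j) * cofactor (E * K) (n-1) j)"
  have "det (Kmat n (d+t) (u+t) (l+t)) = det K + t * c" for t
  proof -
    have "Kmat n (d+t) (u+t) (l+t) = K + t \<cdot>\<^sub>m J"
      by (intro eq_matI) (auto simp: Kmat_def K_def J_def)
    hence "det (Kmat n (d+t) (u+t) (l+t)) = det E * det (K + t \<cdot>\<^sub>m J)" using detE by simp
    also have "\<dots> = det (E * (K + t \<cdot>\<^sub>m J))"
      using E K J by (intro det_mult[symmetric]) auto
    also have "E * (K + t \<cdot>\<^sub>m J) = E * K + t \<cdot>\<^sub>m (E * J)"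
      using E K J by (simp add: mult_add_distrib_mat mult_smult_distrib)
    also have "det \<dots> = det (E * K) + t * c"
      unfolding c_def using E K J n EJ0 by (intro det_rank_row) auto
    also have "det (E * K) = det K" using det_mult[OF E K] detE by simp
    finally show ?thesis .
  qed
  thus ?thesis unfolding K_def by blast
qed

lemma det_Kmat:
  assumes n: "n > 0" and lu: "l \<noteq> u"
  shows "det (Kmat n d u l) = (l * (d-u)^n - u * (d-l)^n) / (l - u)"
proof -
  obtain c where c: "\<And>t. det (Kmat n (d+t) (u+t) (l+t)) = det (Kmat n d u l) + t * c"
    using det_Kmat_affine[OF n] by blast
  have 1: "(d-u)^n = det (Kmat n d u l) - u * c"
    using c[of "-u"] det_Kmat_lower[of n "d-u" "l-u"] by simp
  have 2: "(d-l)^n = det (Kmat n d u l) - l * c"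
    using c[of "-l"] det_Kmat_upper[of n "d-l" "u-l"] by simp
  have "l - u \<noteq> 0" using lu by simp
  thus ?thesis unfolding 1 2 by (simp add: field_simps)
qed

lemma chi_Kmat:
  assumes "n > 0"
  shows "chi \<alpha> n x = det (Kmat n (x - complex_of_real (cot \<alpha>)) (-(complex_of_real (cot \<alpha>) + \<i>)) (-(complex_of_real (cot \<alpha>) - \<i>)))"
proof -
  have "x \<cdot>\<^sub>m 1\<^sub>m n - C_mat \<alpha> n = Kmat n (x - complex_of_real (cot \<alpha>)) (-(complex_of_real (cot \<alpha>) + \<i>)) (-(complex_of_real (cot \<alpha>) - \<i>))"
    by (intro eq_matI) (auto simp: Kmat_def C_mat_def J_mat_def B_mat_def)
  thus ?thesis using assms by (simp add: chi_def)
qed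

lemma chi_closed:
  "chi \<alpha> n x = ((complex_of_real (cot \<alpha>) + \<i>) * (x - \<i>)^n - (complex_of_real (cot \<alpha>) - \<i>) * (x + \<i>)^n) / (2*\<i>)"
proof (cases "n = 0")
  case True thus ?thesis by (simp add: chi_def field_simps)
next
  case False
  let ?a = "complex_of_real (cot \<alpha>)"
  have ne: "-(?a - \<i>) \<noteq> -(?a + \<i>)" by (simp add: complex_eq_iff)
  have "chi \<alpha> n x = det (Kmat n (x - ?a) (-(?a + \<i>)) (-(?a - \<i>)))"
    using False by (simp add: chi_Kmat)
  also have "\<dots> = (-(?a - \<i>) * (x - ?a - -(?a + \<i>))^n - -(?a + \<i>) * (x - ?a - -(?a - \<i>))^n) / (-(?a - \<i>) - -(?a + \<i>))"
    using False ne by (intro det_Kmat) auto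
  also have "\<dots> = ((?a + \<i>) * (x - \<i>)^n - (?a - \<i>) * (x + \<i>)^n) / (2*\<i>)"
    by (simp add: field_simps)
  finally show ?thesis .
qed

lemma cot_minus_i: "sin t \<noteq> 0 \<Longrightarrow> complex_of_real (cot t) - \<i> = cis (-t) / complex_of_real (sin t)"
  by (simp add: complex_eq_iff cot_def cis.sel)

lemma cot_plus_i: "sin t \<noteq> 0 \<Longrightarrow> complex_of_real (cot t) + \<i> = cis t / complex_of_real (sin t)"
  by (simp add: complex_eq_iff cot_def cis.sel)

lemma sin_nz:
  assumes "\<forall>m::int. \<alpha> \<noteq> of_int m * pi" "n > 0"
  shows "sin ((\<alpha> + real k * pi) / real n) \<noteq> 0"
proof
  assume "sin ((\<alpha> + real k * pi) / real n) = 0"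
  then obtain m :: int where m: "(\<alpha> + real k * pi) / real n = of_int m * pi"
    by (auto simp: sin_zero_iff_int2)
  hence "\<alpha> = of_int (m * int n - int k) * pi" using assms(2) by (simp add: field_simps)
  thus False using assms(1) by blast
qed

lemma cot_inj:
  assumes "\<forall>m::int. \<alpha> \<noteq> of_int m * pi" "n > 0" "k < n" "k' < n"
    and eq: "cot ((\<alpha> + real k * pi) / real n) = cot ((\<alpha> + real k' * pi) / real n)"
  shows "k = k'"
proof -
  define t1 where "t1 = (\<alpha> + real k * pi) / real n"
  define t2 where "t2 = (\<alpha> + real k' * pi) / real n"
  have s1: "sin t1 \<noteq> 0" and s2: "sin t2 \<noteq> 0" using sin_nz[OF assms(1,2)] t1_def t2_def by auto
  from eq have "cos t1 / sin t1 = cos t2 / sin t2" by (simp add: cot_def t1_def t2_def)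
  hence "cos t1 * sin t2 - sin t1 * cos t2 = 0" using s1 s2 by (simp add: field_simps)
  hence "sin (t2 - t1) = 0" by (simp add: sin_diff mult.commute)
  then obtain m :: int where m: "t2 - t1 = of_int m * pi" by (auto simp: sin_zero_iff_int2)
  have "t2 - t1 = (real k' - real k) * pi / real n"
    unfolding t1_def t2_def diff_divide_distrib[symmetric] by (simp add: algebra_simps)
  with m have "(real k' - real k) * pi = (of_int m * real n) * pi" using assms(2) by (simp add: field_simps)
  hence "real k' - real k = of_int m * real n" by simp
  hence mi: "int k' - int k = m * int n"
    by (metis of_int_eq_iff of_int_mult of_int_of_nat_eq of_int_diff)
  show ?thesis
  proof (cases "m = 0")
    case True thus ?thesis using mi by simp
  next
    case False
    hence "\<bar>m * int n\<bar> \<ge> int n" by (simp add: abs_mult mult_le_cancel_right1, linarith)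
    moreover have "\<bar>int k' - int k\<bar> < int n" using assms(3,4) by linarith
    ultimately show ?thesis using mi by simp
  qed
qed

lemma root:
  fixes k :: nat
  assumes "\<forall>m::int. \<alpha> \<noteq> of_int m * pi" "n > 0"
  defines "x \<equiv> complex_of_real (cot ((\<alpha> + real k * pi) / real n))"
  shows "(complex_of_real (cot \<alpha>) + \<i>) * (x - \<i>)^n = (complex_of_real (cot \<alpha>) - \<i>) * (x + \<i>)^n"
proof -
  define t where "t = (\<alpha> + real k * pi) / real n"
  have st: "sin t \<noteq> 0" using sin_nz[OF assms(1,2)] t_def by simp
  have sa: "sin \<alpha> \<noteq> 0" using assms(1) by (auto simp: sin_zero_iff_int2)
  have nt: "real n * t = \<alpha> + real k * pi" using assms(2) by (simp add: t_def)
  have "(complex_of_real (cot \<alpha>) + \<i>) * (x - \<i>)^n = cis \<alpha> * cis (- (real n * t)) / (complex_of_real (sin \<alpha>) * complex_of_real (sin t) ^ n)"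
    unfolding x_def t_def[symmetric] cot_plus_i[OF sa] cot_minus_i[OF st]
    by (simp add: power_divide DeMoivre)
  also have "cis \<alpha> * cis (- (real n * t)) = cis (- (real k * pi))" by (simp add: cis_mult nt)
  also have "cis (- (real k * pi)) = cis (real k * pi)" by (simp add: complex_eq_iff)
  also have "cis (real k * pi) = cis (-\<alpha>) * cis (real n * t)" by (simp add: cis_mult nt)
  also have "cis (-\<alpha>) * cis (real n * t) / (complex_of_real (sin \<alpha>) * complex_of_real (sin t) ^ n)
     = (complex_of_real (cot \<alpha>) - \<i>) * (x + \<i>)^n"
    unfolding x_def t_def[symmetric] cot_plus_i[OF st] cot_minus_i[OF sa]
    by (simp add: power_divide DeMoivre)
  finally show ?thesis .
qed

lemma prod_formula:
  assumes as: "\<forall>m::int. \<alpha> \<noteq> of_int m * pi" and n: "n > 0"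
  shows "chi \<alpha> n x = (\<Prod>k<n. x - complex_of_real (cot ((\<alpha> + real k * pi) / real n)))"
proof -
  define a where "a = complex_of_real (cot \<alpha>)"
  define r where "r = (\<lambda>k::nat. complex_of_real (cot ((\<alpha> + real k * pi) / real n)))"
  define P where "P = smult (1/(2*\<i>)) (smult (a+\<i>) ([:-\<i>,1:]^n) - smult (a-\<i>) ([:\<i>,1:]^n))"
  define Q where "Q = (\<Prod>k<n. [:- r k, 1:])"
  have poP: "poly P y = chi \<alpha> n y" for y
  proof -
    have 1: "poly [:-\<i>,1:] y = y - \<i>" "poly [:\<i>,1:] y = y + \<i>" by simp_all
    show ?thesis unfolding P_def poly_smult poly_diff poly_power 1 chi_closed a_def
      by simp
  qed
  have poQ: "poly Q y = (\<Prod>k<n. y - r k)" for y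
    by (simp add: Q_def poly_prod)
  have degQ: "degree Q = n"
    unfolding Q_def by (subst degree_prod_sum_eq) auto
  have "P = Q"
  proof (rule poly_eqI_degree_lead_coeff[of P n Q "r ` {..<n}"])
    have "coeff P n = (1/(2*\<i>)) * ((a+\<i>) - (a-\<i>))"
      by (simp add: P_def coeff_linear_power)
    also have "\<dots> = 1" by simp
    also have "1 = lead_coeff Q" unfolding Q_def by (simp add: lead_coeff_prod)
    finally show "coeff P n = coeff Q n" using degQ by simp
    have "inj_on r {..<n}"
      by (intro inj_onI) (use cot_inj[OF as n] in \<open>auto simp: r_def\<close>)
    thus "card (r ` {..<n}) \<ge> n" by (simp add: card_image)
    show "degree P \<le> n" unfolding P_def
      by (intro order.trans[OF degree_smult_le] order.trans[OF degree_diff_le])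
         (auto intro: order.trans[OF degree_smult_le] simp: degree_linear_power)
    show "degree Q \<le> n" using degQ by simp
    fix z assume "z \<in> r ` {..<n}"
    then obtain k where k: "k < n" "z = r k" by auto
    have "poly Q z = 0" using k by (auto simp: poQ)
    moreover have "poly P z = 0" using root[OF as n, of k] k
      by (simp add: poP chi_closed r_def)
    ultimately show "poly P z = poly Q z" by simp
  qed
  hence "chi \<alpha> n x = poly Q x" using poP by metis
  thus ?thesis by (simp add: poQ r_def)
qed

theorem lemma2p1:
  fixes \<alpha> :: real
  assumes "\<forall>m::int. \<alpha> \<noteq> of_int m * pi"
  defines "a \<equiv> complex_of_real (cot \<alpha>)"
  defines "w \<equiv> a + \<i>"
  shows "(\<forall>n\<ge>2. \<forall>x::complex.
            chi \<alpha> n x = (2*x - 2*a + w + cnj w) * chi \<alpha> (n-1) x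
                        - (x - a + w) * (x - a + cnj w) * chi \<alpha> (n-2) x)
       \<and> (\<forall>n\<ge>1. \<forall>l::real.
            chi \<alpha> n (complex_of_real l)
              = ((complex_of_real (cot \<alpha>) + \<i>) * (complex_of_real l - \<i>)^n
                 - (complex_of_real (cot \<alpha>) - \<i>) * (complex_of_real l + \<i>)^n) / (2*\<i>)
          \<and> chi \<alpha> n (complex_of_real l)
              = complex_of_real (Im ((complex_of_real (cot \<alpha>) + \<i>) * (complex_of_real l - \<i>)^n)))
       \<and> (\<forall>n\<ge>1. \<forall>x::complex.
            chi \<alpha> n x = (\<Prod>k<n. x - complex_of_real (cot ((\<alpha> + real k * pi) / real n))))"
proof (intro conjI allI impI)
  fix n :: nat and x :: complex assume n: "n \<ge> 2"
  then obtain m where m: "n = Suc (Suc m)" by (metis add_2_eq_Suc le_Suc_ex)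
  have c: "cnj w = a - \<i>" by (simp add: w_def a_def)
  show "chi \<alpha> n x = (2*x - 2*a + w + cnj w) * chi \<alpha> (n-1) x
                        - (x - a + w) * (x - a + cnj w) * chi \<alpha> (n-2) x"
    unfolding c chi_closed m by (simp add: w_def a_def[symmetric] field_simps)
next
  fix n :: nat and l :: real
  show "chi \<alpha> n (complex_of_real l)
              = ((complex_of_real (cot \<alpha>) + \<i>) * (complex_of_real l - \<i>)^n
                 - (complex_of_real (cot \<alpha>) - \<i>) * (complex_of_real l + \<i>)^n) / (2*\<i>)"
    by (rule chi_closed)
  have imz: "complex_of_real (Im z) = (z - cnj z) / (2*\<i>)" for z
    by (simp add: complex_eq_iff)
  have "complex_of_real (Im ((complex_of_real (cot \<alpha>) + \<i>) * (complex_of_real l - \<i>)^n))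
     = (((complex_of_real (cot \<alpha>) + \<i>) * (complex_of_real l - \<i>)^n)
        - cnj ((complex_of_real (cot \<alpha>) + \<i>) * (complex_of_real l - \<i>)^n)) / (2*\<i>)"
    by (rule imz)
  also have "cnj ((complex_of_real (cot \<alpha>) + \<i>) * (complex_of_real l - \<i>)^n)
     = (complex_of_real (cot \<alpha>) - \<i>) * (complex_of_real l + \<i>)^n"
    by simp
  finally show "chi \<alpha> n (complex_of_real l)
              = complex_of_real (Im ((complex_of_real (cot \<alpha>) + \<i>) * (complex_of_real l - \<i>)^n))"
    by (simp add: chi_closed)
next
  fix n :: nat and x :: complex assume "n \<ge> 1"
  thus "chi \<alpha> n x = (\<Prod>k<n. x - complex_of_real (cot ((\<alpha> + real k * pi) / real n)))"
    using prod_formula[OF assms(1)] by simp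
qed

end
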